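(* Let $\Omega$ be a Polish space admitting a nonzero atomless finite positive Borel measure (e.g. $\Omega=\mathbb{R}$). Then $\mathscr{L}(\mathscr{M}(\Omega),\sigma)$ is not an ideal of $\mathscr{L}(\mathscr{M}(\Omega))$: for every positive measure $\mu\ne0$ there is an operator $T\in\mathscr{L}(\mathscr{M}(\Omega))$ with $0\le T\le \mathbb{1}\otimes\mu$ (where $(\mathbb{1}\otimes\mu)\nu=\nu(\Omega)\mu$ is weakly continuous) such that $T$ is not weakly continuous.
   Context: $\mathscr{M}(\Omega)$ is the Banach lattice of finite signed Borel measures; $\mathscr{L}(\mathscr{M}(\Omega))$ the bounded operators on it with the order $S\le T$ iff $S\mu\le T\mu$ for positive $\mu$. An operator is weakly continuous if $(T\nu)(A)=\int k(x,A)\,d\nu(x)$ for a bounded transition kernel $k$ (a map $\Omega\times\mathscr{B}(\Omega)\to\mathbb{R}$, signed measure in the second variable, measurable in the first, with $\sup_x\lvert k\rvert(x,\Omega)<\infty$); equivalently, its norm adjoint leaves the space $B_b(\Omega)$ of bounded Borel functions invariant. $\mathscr{L}(\mathscr{M}(\Omega),\sigma)$ is the space of weakly continuous operators. *)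

theory Defs
  imports "HOL-Analysis.Analysis"
begin

text \<open>Finite signed Borel measures on \<Omega> (a type of class polish_space) are represented as
  real-valued set functions that vanish on non-Borel sets, vanish on the empty set and are
  countably additive on the Borel sets.\<close>

definition signed_measure :: "('a::topological_space set \<Rightarrow> real) \<Rightarrow> bool" where
  "signed_measure \<nu> \<longleftrightarrow>
     (\<forall>A. A \<notin> sets borel \<longrightarrow> \<nu> A = 0) \<and> \<nu> {} = 0 \<and>
     (\<forall>A::nat \<Rightarrow> 'a set. range A \<subseteq> sets borel \<longrightarrow> disjoint_family A \<longrightarrow>
        (\<lambda>n. \<nu> (A n)) sums \<nu> (\<Union>n. A n))"

definition positive_sm :: "('a::topological_space set \<Rightarrow> real) \<Rightarrow> bool" where
  "positive_sm \<nu> \<longleftrightarrow> signed_measure \<nu> \<and> (\<forall>A. \<nu> A \<ge> 0)"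

definition tv_norm :: "('a::topological_space set \<Rightarrow> real) \<Rightarrow> real" where
  "tv_norm \<nu> = (SUP P \<in> {P. finite P \<and> P \<subseteq> sets borel \<and> disjoint P}. \<Sum>A\<in>P. \<bar>\<nu> A\<bar>)"

definition pos_var :: "('a::topological_space set \<Rightarrow> real) \<Rightarrow> 'a set \<Rightarrow> real" where
  "pos_var \<nu> A = (SUP B \<in> {B. B \<in> sets borel \<and> B \<subseteq> A}. \<nu> B)"

definition pos_meas :: "('a::topological_space set \<Rightarrow> real) \<Rightarrow> 'a measure" where
  "pos_meas \<nu> = measure_of UNIV (sets borel) (\<lambda>A. ennreal (pos_var \<nu> A))"

definition neg_meas :: "('a::topological_space set \<Rightarrow> real) \<Rightarrow> 'a measure" where
  "neg_meas \<nu> = pos_meas (\<lambda>A. - \<nu> A)"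

definition sm_integral :: "('a::topological_space set \<Rightarrow> real) \<Rightarrow> ('a \<Rightarrow> real) \<Rightarrow> real" where
  "sm_integral \<nu> f = (\<integral>x. f x \<partial>pos_meas \<nu>) - (\<integral>x. f x \<partial>neg_meas \<nu>)"

definition bounded_op ::
  "(('a::topological_space set \<Rightarrow> real) \<Rightarrow> ('a set \<Rightarrow> real)) \<Rightarrow> bool" where
  "bounded_op T \<longleftrightarrow>
     (\<forall>\<nu>. signed_measure \<nu> \<longrightarrow> signed_measure (T \<nu>)) \<and>
     (\<forall>\<nu> \<eta> a b. signed_measure \<nu> \<longrightarrow> signed_measure \<eta> \<longrightarrow>
        T (\<lambda>A. a * \<nu> A + b * \<eta> A) = (\<lambda>A. a * T \<nu> A + b * T \<eta> A)) \<and>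
     (\<exists>C. \<forall>\<nu>. signed_measure \<nu> \<longrightarrow> tv_norm (T \<nu>) \<le> C * tv_norm \<nu>)"

definition bounded_kernel :: "('a::topological_space \<Rightarrow> 'a set \<Rightarrow> real) \<Rightarrow> bool" where
  "bounded_kernel k \<longleftrightarrow>
     (\<forall>x. signed_measure (k x)) \<and>
     (\<forall>A \<in> sets borel. (\<lambda>x. k x A) \<in> borel_measurable borel) \<and>
     (\<exists>C. \<forall>x. tv_norm (k x) \<le> C)"

definition weakly_continuous ::
  "(('a::topological_space set \<Rightarrow> real) \<Rightarrow> ('a set \<Rightarrow> real)) \<Rightarrow> bool" where
  "weakly_continuous T \<longleftrightarrow> bounded_op T \<and>
     (\<exists>k. bounded_kernel k \<and>
        (\<forall>\<nu>. signed_measure \<nu> \<longrightarrow>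
           (\<forall>A \<in> sets borel. T \<nu> A = sm_integral \<nu> (\<lambda>x. k x A))))"

definition one_tensor :: "('a set \<Rightarrow> real) \<Rightarrow> ('a set \<Rightarrow> real) \<Rightarrow> ('a set \<Rightarrow> real)" where
  "one_tensor \<mu> \<nu> = (\<lambda>A. \<nu> UNIV * \<mu> A)"

definition op_le ::
  "(('a::topological_space set \<Rightarrow> real) \<Rightarrow> ('a set \<Rightarrow> real)) \<Rightarrow> (('a set \<Rightarrow> real) \<Rightarrow> ('a set \<Rightarrow> real)) \<Rightarrow> bool" where
  "op_le S T \<longleftrightarrow> (\<forall>\<nu>. positive_sm \<nu> \<longrightarrow> (\<forall>A. S \<nu> A \<le> T \<nu> A))"

definition atomless_sm :: "('a::topological_space set \<Rightarrow> real) \<Rightarrow> bool" where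
  "atomless_sm m \<longleftrightarrow> \<not> (\<exists>A \<in> sets borel. m A > 0 \<and>
       (\<forall>B \<in> sets borel. B \<subseteq> A \<longrightarrow> m B = 0 \<or> m B = m A))"

end

theory Submission
  imports Defs "HOL-Probability.Probability"
begin


lemma sm_nonborel: "signed_measure \<nu> \<Longrightarrow> A \<notin> sets borel \<Longrightarrow> \<nu> A = 0"
  by (simp add: signed_measure_def)

lemma sm_empty: "signed_measure \<nu> \<Longrightarrow> \<nu> {} = 0"
  by (simp add: signed_measure_def)

lemma sm_ca: "signed_measure \<nu> \<Longrightarrow> range A \<subseteq> sets borel \<Longrightarrow> disjoint_family A \<Longrightarrow>
   (\<lambda>n. \<nu> (A n)) sums \<nu> (\<Union>n. A n)"
  by (simp add: signed_measure_def)

lemma sm_add: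
  assumes "signed_measure \<nu>" "A \<in> sets borel" "B \<in> sets borel" "A \<inter> B = {}"
  shows "\<nu> (A \<union> B) = \<nu> A + \<nu> B"
proof -
  define F where "F = (\<lambda>n::nat. if n = 0 then A else if n = 1 then B else {})"
  have r: "range F \<subseteq> sets borel" using assms by (auto simp: F_def)
  have d: "disjoint_family F" using assms(4) unfolding disjoint_family_on_def F_def by auto
  have u: "(\<Union>n. F n) = A \<union> B"
    by (auto simp: F_def split: if_splits)
  have s1: "(\<lambda>n. \<nu> (F n)) sums \<nu> (A \<union> B)" using sm_ca[OF assms(1) r d] u by simp
  have "(\<lambda>n. \<nu> (F n)) sums (\<Sum>n\<in>{0,1}. \<nu> (F n))"
    by (rule sums_finite) (auto simp: F_def sm_empty[OF assms(1)])
  then have "(\<lambda>n. \<nu> (F n)) sums (\<nu> A + \<nu> B)" by (simp add: F_def)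
  with s1 show ?thesis using sums_unique2 by blast
qed

lemma sm_diff:
  assumes "signed_measure \<nu>" "A \<in> sets borel" "B \<in> sets borel" "A \<subseteq> B"
  shows "\<nu> (B - A) = \<nu> B - \<nu> A"
proof -
  have "B = A \<union> (B - A)" using assms by auto
  then have "\<nu> B = \<nu> A + \<nu> (B - A)" using sm_add[OF assms(1) assms(2), of "B - A"] assms by auto
  then show ?thesis by simp
qed

lemma sm_split:
  assumes "signed_measure \<nu>" "A \<in> sets borel" "B \<in> sets borel"
  shows "\<nu> A = \<nu> (A \<inter> B) + \<nu> (A - B)"
proof -
  have "A = (A \<inter> B) \<union> (A - B)" by auto
  then show ?thesis using sm_add[OF assms(1), of "A \<inter> B" "A - B"] assms by auto
qed

lemma sm_finite_union:
  assumes "signed_measure \<nu>" "finite P" "P \<subseteq> sets borel" "disjoint P"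
  shows "(\<Sum>A\<in>P. \<nu> A) = \<nu> (\<Union>P)"
  using assms(2,3,4)
proof (induction P rule: finite_induct)
  case empty then show ?case by (simp add: sm_empty[OF assms(1)])
next
  case (insert A P)
  have dP: "disjoint P" using insert.prems(2) by (simp add: pairwise_insert)
  have "A \<inter> \<Union>P = {}" using insert.prems(2) insert.hyps(2)
    by (auto simp: pairwise_insert disjnt_def)
  moreover have "\<Union>P \<in> sets borel" using insert by (auto intro: sets.finite_Union)
  ultimately have "\<nu> (\<Union>(insert A P)) = \<nu> A + \<nu> (\<Union>P)"
    using sm_add[OF assms(1), of A "\<Union>P"] insert.prems by auto
  then show ?case using insert dP by simp
qed

lemma finite_borel: "finite (F::'a::t2_space set) \<Longrightarrow> F \<in> sets borel"
  by (simp add: borel_closed finite_imp_closed)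

lemma sm_points:
  assumes "signed_measure \<nu>" "finite (F::'a::t2_space set)"
  shows "(\<Sum>x\<in>F. \<nu> {x}) = \<nu> F"
  using assms(2)
proof (induction F rule: finite_induct)
  case empty then show ?case by (simp add: sm_empty[OF assms(1)])
next
  case (insert x F)
  have "\<nu> ({x} \<union> F) = \<nu> {x} + \<nu> F"
    using sm_add[OF assms(1), of "{x}" F] insert finite_borel[of "{x}"] finite_borel[of F] by auto
  then show ?case using insert by simp
qed

lemma sm_scale:
  assumes "signed_measure \<nu>" shows "signed_measure (\<lambda>A. c * \<nu> A)"
  using assms unfolding signed_measure_def by (auto intro: sums_mult)

lemma sm_lin:
  assumes "signed_measure \<nu>" "signed_measure \<eta>" shows "signed_measure (\<lambda>A. a * \<nu> A + b * \<eta> A)"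
  using assms unfolding signed_measure_def by (auto intro!: sums_add sums_mult)

lemma sm_uminus:
  assumes "signed_measure \<nu>" shows "signed_measure (\<lambda>A. - \<nu> A)"
  using sm_scale[OF assms, of "-1"] by simp

lemma pos_mono:
  assumes "positive_sm \<mu>" "A \<subseteq> B" "B \<in> sets borel"
  shows "\<mu> A \<le> \<mu> B"
proof (cases "A \<in> sets borel")
  case True
  then have "\<mu> B = \<mu> A + \<mu> (B - A)" using sm_diff[of \<mu> A B] assms by (simp add: positive_sm_def)
  then show ?thesis using assms by (simp add: positive_sm_def)
next
  case False then show ?thesis using assms by (simp add: positive_sm_def signed_measure_def)
qed

lemma pos_le_univ: "positive_sm \<mu> \<Longrightarrow> \<mu> A \<le> \<mu> UNIV"
  using pos_mono[of \<mu> A UNIV] by simp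




lemma sm_bounded:
  fixes \<nu> :: "'a::topological_space set \<Rightarrow> real"
  assumes sm: "signed_measure \<nu>"
  shows "\<exists>M. \<forall>A. \<bar>\<nu> A\<bar> \<le> M"
proof -
  define S where "S B = (\<lambda>D. \<bar>\<nu> D\<bar>) ` {D. D \<in> sets borel \<and> D \<subseteq> B}" for B
  define bad where "bad B \<longleftrightarrow> B \<in> sets borel \<and> \<not> bdd_above (S B)" for B
  have step: "\<exists>C. C \<in> sets borel \<and> C \<subseteq> B \<and> 1 \<le> \<bar>\<nu> C\<bar> \<and> bad (B - C)" if bB: "bad B" for B
  proof -
    have Bb: "B \<in> sets borel" using bB by (simp add: bad_def)
    have "\<not> (\<forall>x\<in>S B. x \<le> \<bar>\<nu> B\<bar> + 1)" using bB unfolding bad_def bdd_above_def by blast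
    then obtain D where D: "D \<in> sets borel" "D \<subseteq> B" "\<bar>\<nu> D\<bar> > \<bar>\<nu> B\<bar> + 1"
      unfolding S_def by force
    have BD: "B - D \<in> sets borel" using D Bb by auto
    have "\<nu> (B - D) = \<nu> B - \<nu> D" using sm_diff[OF sm D(1) Bb D(2)] .
    then have nBD: "\<bar>\<nu> (B - D)\<bar> \<ge> 1" using D(3) by linarith
    show ?thesis
    proof (cases "bad D")
      case True
      have "B - (B - D) = D" using D(2) by auto
      then show ?thesis using True BD nBD by (intro exI[of _ "B - D"]) auto
    next
      case False
      then obtain K1 where K1: "\<And>x. x \<in> S D \<Longrightarrow> x \<le> K1" using D(1) unfolding bad_def bdd_above_def by auto
      have "bad (B - D)"
      proof (rule ccontr)
        assume "\<not> bad (B - D)"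
        then obtain K2 where K2: "\<And>x. x \<in> S (B - D) \<Longrightarrow> x \<le> K2" using BD unfolding bad_def bdd_above_def by auto
        have "bdd_above (S B)"
        proof (rule bdd_aboveI)
          fix x assume "x \<in> S B"
          then obtain E where E: "E \<in> sets borel" "E \<subseteq> B" "x = \<bar>\<nu> E\<bar>" unfolding S_def by auto
          have "\<nu> E = \<nu> (E \<inter> D) + \<nu> (E - D)" using sm_split[OF sm E(1) D(1)] .
          moreover have "\<bar>\<nu> (E \<inter> D)\<bar> \<le> K1" using K1[of "\<bar>\<nu> (E \<inter> D)\<bar>"] E D unfolding S_def by auto
          moreover have "\<bar>\<nu> (E - D)\<bar> \<le> K2" using K2[of "\<bar>\<nu> (E - D)\<bar>"] E D unfolding S_def by auto
          ultimately show "x \<le> K1 + K2" using E(3) by linarith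
        qed
        then show False using bB by (simp add: bad_def)
      qed
      then show ?thesis using D nBD by auto
    qed
  qed
  define nxt where "nxt B = (SOME C. C \<in> sets borel \<and> C \<subseteq> B \<and> 1 \<le> \<bar>\<nu> C\<bar> \<and> bad (B - C))" for B
  have nxt: "nxt B \<in> sets borel \<and> nxt B \<subseteq> B \<and> 1 \<le> \<bar>\<nu> (nxt B)\<bar> \<and> bad (B - nxt B)" if "bad B" for B
    unfolding nxt_def by (rule someI_ex[OF step[OF that]])
  show ?thesis
  proof (cases "bad UNIV")
    case False
    then obtain M where M: "\<And>x. x \<in> S UNIV \<Longrightarrow> x \<le> M" unfolding bad_def bdd_above_def by auto
    have "\<bar>\<nu> A\<bar> \<le> M" for A
    proof (cases "A \<in> sets borel")
      case True then show ?thesis using M[of "\<bar>\<nu> A\<bar>"] unfolding S_def by auto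
    next
      case False
      have "\<bar>\<nu> {}\<bar> \<le> M" using M[of "\<bar>\<nu> {}\<bar>"] unfolding S_def by auto
      then show ?thesis using False sm_nonborel[OF sm] sm_empty[OF sm] by simp
    qed
    then show ?thesis by blast
  next
    case True
    define Bs where "Bs n = rec_nat UNIV (\<lambda>_ B. B - nxt B) n" for n
    have Bs0: "Bs 0 = UNIV" and BsS: "Bs (Suc n) = Bs n - nxt (Bs n)" for n by (simp_all add: Bs_def)
    have badn: "bad (Bs n)" for n
      by (induction n) (use True nxt in \<open>auto simp: Bs0 BsS\<close>)
    define E where "E n = nxt (Bs n)" for n
    have E: "E n \<in> sets borel" "E n \<subseteq> Bs n" "1 \<le> \<bar>\<nu> (E n)\<bar>" for n using nxt[OF badn[of n]] by (auto simp: E_def)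
    have dec: "decseq Bs" by (rule decseq_SucI) (auto simp: BsS)
    have disj1: "E m \<inter> E n = {}" if "m < n" for m n
    proof -
      have "E n \<subseteq> Bs (Suc m)" using E(2)[of n] decseqD[OF dec, of "Suc m" n] that by auto
      then show ?thesis by (auto simp: BsS E_def)
    qed
    have "disjoint_family E" unfolding disjoint_family_on_def
      using disj1 by (metis inf_commute linorder_neqE_nat)
    then have "(\<lambda>n. \<nu> (E n)) sums \<nu> (\<Union>n. E n)" using sm_ca[OF sm] E(1) by auto
    then have "(\<lambda>n. \<nu> (E n)) \<longlonglongrightarrow> 0" using summable_LIMSEQ_zero sums_summable by blast
    then obtain N where "\<forall>n\<ge>N. norm (\<nu> (E n) - 0) < 1" using LIMSEQ_D[of "\<lambda>n. \<nu> (E n)" 0 1] by auto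
    then have "\<bar>\<nu> (E N)\<bar> < 1" by auto
    then show ?thesis using E(3)[of N] by simp
  qed
qed




definition PS :: "'a::topological_space set set set" where
  "PS = {P. finite P \<and> P \<subseteq> sets borel \<and> disjoint P}"

lemma tv_norm_PS: "tv_norm \<nu> = (SUP P \<in> PS. \<Sum>A\<in>P. \<bar>\<nu> A\<bar>)"
  by (simp add: tv_norm_def PS_def)

lemma PS_empty: "{} \<in> PS" by (simp add: PS_def)

lemma tv_bdd:
  assumes sm: "signed_measure \<nu>"
  shows "bdd_above ((\<lambda>P. \<Sum>A\<in>P. \<bar>\<nu> A\<bar>) ` PS)"
proof -
  obtain M where M: "\<And>A. \<bar>\<nu> A\<bar> \<le> M" using sm_bounded[OF sm] by blast
  show ?thesis
  proof (rule bdd_aboveI)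
    fix x assume "x \<in> (\<lambda>P. \<Sum>A\<in>P. \<bar>\<nu> A\<bar>) ` PS"
    then obtain P where P: "finite P" "P \<subseteq> sets borel" "disjoint P" and x: "x = (\<Sum>A\<in>P. \<bar>\<nu> A\<bar>)"
      by (auto simp: PS_def)
    define Pp where "Pp = {A\<in>P. 0 \<le> \<nu> A}"
    define Pn where "Pn = {A\<in>P. \<not> 0 \<le> \<nu> A}"
    have "x = (\<Sum>A\<in>P. if 0 \<le> \<nu> A then \<nu> A else 0) + (\<Sum>A\<in>P. if \<not> 0 \<le> \<nu> A then - \<nu> A else 0)"
      unfolding x sum.distrib[symmetric] by (rule sum.cong) auto
    also have "(\<Sum>A\<in>P. if \<not> 0 \<le> \<nu> A then - \<nu> A else 0) = - (\<Sum>A\<in>P. if \<not> 0 \<le> \<nu> A then \<nu> A else 0)"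
      by (subst sum_negf[symmetric]) (rule sum.cong, auto)
    also have "(\<Sum>A\<in>P. if 0 \<le> \<nu> A then \<nu> A else 0) + - (\<Sum>A\<in>P. if \<not> 0 \<le> \<nu> A then \<nu> A else 0) = (\<Sum>A\<in>Pp. \<nu> A) - (\<Sum>A\<in>Pn. \<nu> A)"
      unfolding Pp_def Pn_def using P(1) by (simp add: sum.inter_filter)
    also have "\<dots> = \<nu> (\<Union>Pp) - \<nu> (\<Union>Pn)"
    proof -
      have "Pp \<subseteq> P" "Pn \<subseteq> P" by (auto simp: Pp_def Pn_def)
      then have "(\<Sum>A\<in>Pp. \<nu> A) = \<nu> (\<Union>Pp)" "(\<Sum>A\<in>Pn. \<nu> A) = \<nu> (\<Union>Pn)"
        using sm_finite_union[OF sm, of Pp] sm_finite_union[OF sm, of Pn] P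
        by (auto intro: pairwise_subset dest: finite_subset)
      then show ?thesis by simp
    qed
    also have "\<dots> \<le> M + M" using M[of "\<Union>Pp"] M[of "\<Union>Pn"] by linarith
    finally show "x \<le> M + M" .
  qed
qed

lemma tv_ge:
  assumes "signed_measure \<nu>" "P \<in> PS"
  shows "(\<Sum>A\<in>P. \<bar>\<nu> A\<bar>) \<le> tv_norm \<nu>"
  unfolding tv_norm_PS using cSUP_upper[OF assms(2) tv_bdd[OF assms(1)]] .

lemma tv_univ:
  assumes "signed_measure \<nu>"
  shows "\<bar>\<nu> UNIV\<bar> \<le> tv_norm \<nu>"
  using tv_ge[OF assms, of "{UNIV}"] by (simp add: PS_def)

lemma tv_points:
  fixes \<nu> :: "'a::t2_space set \<Rightarrow> real"
  assumes "signed_measure \<nu>" "finite F"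
  shows "(\<Sum>x\<in>F. \<bar>\<nu> {x}\<bar>) \<le> tv_norm \<nu>"
proof -
  have "(\<lambda>x. {x}) ` F \<in> PS" using assms(2)
    by (auto simp: PS_def finite_borel pairwise_def disjnt_def)
  from tv_ge[OF assms(1) this] show ?thesis
    by (simp add: sum.reindex inj_on_def)
qed

lemma tv_scale_pos:
  fixes \<mu> :: "'a::topological_space set \<Rightarrow> real"
  assumes "positive_sm \<mu>"
  shows "tv_norm (\<lambda>A. c * \<mu> A) \<le> \<bar>c\<bar> * \<mu> UNIV"
  unfolding tv_norm_PS
proof (rule cSUP_least)
  show "PS \<noteq> {}" using PS_empty by blast
  fix P :: "'a set set" assume "P \<in> PS"
  then have P: "finite P" "P \<subseteq> sets borel" "disjoint P" by (auto simp: PS_def)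
  have sm: "signed_measure \<mu>" and nn: "\<And>A. 0 \<le> \<mu> A" using assms by (auto simp: positive_sm_def)
  have "(\<Sum>A\<in>P. \<bar>c * \<mu> A\<bar>) = \<bar>c\<bar> * (\<Sum>A\<in>P. \<mu> A)"
    by (simp add: abs_mult sum_distrib_left nn)
  also have "\<dots> = \<bar>c\<bar> * \<mu> (\<Union>P)" using sm_finite_union[OF sm P] by simp
  also have "\<dots> \<le> \<bar>c\<bar> * \<mu> UNIV" using pos_le_univ[OF assms] by (simp add: mult_left_mono)
  finally show "(\<Sum>A\<in>P. \<bar>c * \<mu> A\<bar>) \<le> \<bar>c\<bar> * \<mu> UNIV" .
qed



lemma pv_def2: "pos_var \<nu> A = (SUP B \<in> {B. B \<in> sets borel \<and> B \<subseteq> A}. \<nu> B)"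
  by (simp add: pos_var_def)

lemma pv_bdd:
  assumes "signed_measure \<nu>"
  shows "bdd_above (\<nu> ` {B. B \<in> sets borel \<and> B \<subseteq> A})"
proof -
  obtain M where M: "\<And>A. \<bar>\<nu> A\<bar> \<le> M" using sm_bounded[OF assms] by blast
  show ?thesis by (rule bdd_aboveI[of _ M]) (use M in \<open>auto simp: abs_le_iff\<close>)
qed

lemma pv_upper:
  assumes "signed_measure \<nu>" "B \<in> sets borel" "B \<subseteq> A"
  shows "\<nu> B \<le> pos_var \<nu> A"
  unfolding pv_def2 by (rule cSUP_upper[OF _ pv_bdd[OF assms(1)]]) (use assms in auto)

lemma pv_least:
  assumes "\<And>B. B \<in> sets borel \<Longrightarrow> B \<subseteq> A \<Longrightarrow> \<nu> B \<le> c"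
  shows "pos_var \<nu> A \<le> c"
  unfolding pv_def2 by (rule cSUP_least) (use assms in auto)

lemma pv_nonneg:
  assumes "signed_measure \<nu>" shows "0 \<le> pos_var \<nu> A"
  using pv_upper[OF assms, of "{}" A] sm_empty[OF assms] by simp

lemma pv_mono:
  assumes "signed_measure \<nu>" "A \<subseteq> A'" shows "pos_var \<nu> A \<le> pos_var \<nu> A'"
  by (rule pv_least) (use assms pv_upper[OF assms(1)] in auto)

lemma pv_add:
  assumes sm: "signed_measure \<nu>" and AB: "A \<in> sets borel" "A' \<in> sets borel" "A \<inter> A' = {}"
  shows "pos_var \<nu> (A \<union> A') = pos_var \<nu> A + pos_var \<nu> A'"
proof (rule antisym)
  show "pos_var \<nu> (A \<union> A') \<le> pos_var \<nu> A + pos_var \<nu> A'"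
  proof (rule pv_least)
    fix B assume B: "B \<in> sets borel" "B \<subseteq> A \<union> A'"
    have "B \<inter> A - A = {}" by auto
    have "\<nu> B = \<nu> (B \<inter> A) + \<nu> (B - A)" using sm_split[OF sm B(1) AB(1)] .
    moreover have "\<nu> (B \<inter> A) \<le> pos_var \<nu> A" using pv_upper[OF sm, of "B \<inter> A" A] B AB by auto
    moreover have "\<nu> (B - A) \<le> pos_var \<nu> A'" using pv_upper[OF sm, of "B - A" A'] B AB by auto
    ultimately show "\<nu> B \<le> pos_var \<nu> A + pos_var \<nu> A'" by linarith
  qed
next
  have "pos_var \<nu> A' \<le> pos_var \<nu> (A \<union> A') - pos_var \<nu> A"
  proof (rule pv_least)
    fix B' assume B': "B' \<in> sets borel" "B' \<subseteq> A'"
    have "pos_var \<nu> A \<le> pos_var \<nu> (A \<union> A') - \<nu> B'"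
    proof (rule pv_least)
      fix B assume B: "B \<in> sets borel" "B \<subseteq> A"
      have "\<nu> (B \<union> B') = \<nu> B + \<nu> B'" using sm_add[OF sm B(1) B'(1)] B B' AB by auto
      moreover have "\<nu> (B \<union> B') \<le> pos_var \<nu> (A \<union> A')" using pv_upper[OF sm, of "B \<union> B'" "A \<union> A'"] B B' by auto
      ultimately show "\<nu> B \<le> pos_var \<nu> (A \<union> A') - \<nu> B'" by linarith
    qed
    then show "\<nu> B' \<le> pos_var \<nu> (A \<union> A') - pos_var \<nu> A" by linarith
  qed
  then show "pos_var \<nu> A + pos_var \<nu> A' \<le> pos_var \<nu> (A \<union> A')" by linarith
qed

lemma pv_finite_union:
  fixes F :: "nat \<Rightarrow> 'a::topological_space set"
  assumes sm: "signed_measure \<nu>" and F: "range F \<subseteq> sets borel" "disjoint_family F"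
  shows "pos_var \<nu> (\<Union>i<n. F i) = (\<Sum>i<n. pos_var \<nu> (F i))"
proof (induction n)
  case 0 show ?case using pv_nonneg[OF sm, of "{}"] pv_least[of "{}" \<nu> 0] sm_empty[OF sm] by auto
next
  case (Suc n)
  have u: "(\<Union>i<Suc n. F i) = (\<Union>i<n. F i) \<union> F n" by (auto simp: lessThan_Suc)
  have "F i \<inter> F n = {}" if "i < n" for i using F(2) that by (simp add: disjoint_family_on_def)
  then have d: "(\<Union>i<n. F i) \<inter> F n = {}" by auto
  have "(\<Union>i<n. F i) \<in> sets borel" using F(1) by auto
  then show ?case unfolding u using pv_add[OF sm _ _ d] F(1) Suc by auto
qed

lemma pv_sums:
  fixes F :: "nat \<Rightarrow> 'a::topological_space set"
  assumes sm: "signed_measure \<nu>" and F: "range F \<subseteq> sets borel" "disjoint_family F"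
  shows "(\<lambda>i. pos_var \<nu> (F i)) sums pos_var \<nu> (\<Union>i. F i)"
proof -
  let ?U = "\<Union>i. F i"
  have ps: "(\<Sum>i<n. pos_var \<nu> (F i)) \<le> pos_var \<nu> ?U" for n
    using pv_finite_union[OF sm F, of n] pv_mono[OF sm, of "\<Union>i<n. F i" ?U] by auto
  have summ: "summable (\<lambda>i. pos_var \<nu> (F i))"
    by (rule summableI_nonneg_bounded[where x="pos_var \<nu> ?U"]) (use ps pv_nonneg[OF sm] in auto)
  have le1: "suminf (\<lambda>i. pos_var \<nu> (F i)) \<le> pos_var \<nu> ?U"
    by (rule suminf_le_const[OF summ ps])
  have le2: "pos_var \<nu> ?U \<le> suminf (\<lambda>i. pos_var \<nu> (F i))"
  proof (rule pv_least)
    fix B assume B: "B \<in> sets borel" "B \<subseteq> ?U"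
    have r: "range (\<lambda>i. B \<inter> F i) \<subseteq> sets borel" using B F by auto
    have d: "disjoint_family (\<lambda>i. B \<inter> F i)" using F(2) by (auto simp: disjoint_family_on_def)
    have "(\<Union>i. B \<inter> F i) = B" using B by auto
    then have s: "(\<lambda>i. \<nu> (B \<inter> F i)) sums \<nu> B" using sm_ca[OF sm r d] by simp
    have "\<nu> B = suminf (\<lambda>i. \<nu> (B \<inter> F i))" using s by (simp add: sums_unique)
    also have "\<dots> \<le> suminf (\<lambda>i. pos_var \<nu> (F i))"
      by (rule suminf_le) (use pv_upper[OF sm] B F s summ in \<open>auto simp: sums_summable\<close>)
    finally show "\<nu> B \<le> suminf (\<lambda>i. pos_var \<nu> (F i))" .
  qed
  have "suminf (\<lambda>i. pos_var \<nu> (F i)) = pos_var \<nu> ?U" using le1 le2 by linarith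
  then show ?thesis using summable_sums[OF summ] by simp
qed

lemma pv_jordan:
  assumes sm: "signed_measure \<nu>" and A: "A \<in> sets borel"
  shows "pos_var \<nu> A = \<nu> A + pos_var (\<lambda>A. - \<nu> A) A"
proof (rule antisym)
  have smn: "signed_measure (\<lambda>A. - \<nu> A)" by (rule sm_uminus[OF sm])
  show "pos_var \<nu> A \<le> \<nu> A + pos_var (\<lambda>A. - \<nu> A) A"
  proof (rule pv_least)
    fix B assume B: "B \<in> sets borel" "B \<subseteq> A"
    have "\<nu> (A - B) = \<nu> A - \<nu> B" using sm_diff[OF sm B(1) A B(2)] .
    moreover have "- \<nu> (A - B) \<le> pos_var (\<lambda>A. - \<nu> A) A"
      using pv_upper[OF smn, of "A - B" A] A B by auto
    ultimately show "\<nu> B \<le> \<nu> A + pos_var (\<lambda>A. - \<nu> A) A" by linarith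
  qed
  have "pos_var (\<lambda>A. - \<nu> A) A \<le> pos_var \<nu> A - \<nu> A"
  proof (rule pv_least)
    fix B assume B: "B \<in> sets borel" "B \<subseteq> A"
    have "\<nu> (A - B) = \<nu> A - \<nu> B" using sm_diff[OF sm B(1) A B(2)] .
    moreover have "\<nu> (A - B) \<le> pos_var \<nu> A" using pv_upper[OF sm, of "A - B" A] A B by auto
    ultimately show "- \<nu> B \<le> pos_var \<nu> A - \<nu> A" by linarith
  qed
  then show "\<nu> A + pos_var (\<lambda>A. - \<nu> A) A \<le> pos_var \<nu> A" by linarith
qed




lemma sa_borel: "sigma_algebra UNIV (sets (borel :: 'a::topological_space measure))"
  using sets.sigma_algebra_axioms[of borel] by simp

lemma pm_sets: "sets (pos_meas (\<nu> :: 'a::topological_space set \<Rightarrow> real)) = sets borel"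
  unfolding pos_meas_def
  by (subst sets_measure_of) (auto simp: sigma_algebra.sigma_sets_eq[OF sa_borel])

lemma pm_space: "space (pos_meas (\<nu> :: 'a::topological_space set \<Rightarrow> real)) = UNIV"
  unfolding pos_meas_def by (subst space_measure_of) auto

lemma pv_empty: "signed_measure \<nu> \<Longrightarrow> pos_var \<nu> {} = 0"
  using pv_nonneg[of \<nu> "{}"] pv_least[of "{}" \<nu> 0] sm_empty[of \<nu>] by auto

lemma pm_emeasure:
  fixes \<nu> :: "'a::topological_space set \<Rightarrow> real"
  assumes sm: "signed_measure \<nu>" and A: "A \<in> sets borel"
  shows "emeasure (pos_meas \<nu>) A = ennreal (pos_var \<nu> A)"
  unfolding pos_meas_def
proof (rule emeasure_measure_of_sigma[OF sa_borel _ _ A])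
  show "positive (sets borel) (\<lambda>A. ennreal (pos_var \<nu> A))"
    by (simp add: positive_def pv_empty[OF sm])
  show "countably_additive (sets borel) (\<lambda>A. ennreal (pos_var \<nu> A))"
    unfolding countably_additive_def
  proof (intro allI impI)
    fix F :: "nat \<Rightarrow> 'a set" assume F: "range F \<subseteq> sets borel" "disjoint_family F"
    have s: "(\<lambda>i. pos_var \<nu> (F i)) sums pos_var \<nu> (\<Union>i. F i)" by (rule pv_sums[OF sm F])
    have "(\<Sum>i. ennreal (pos_var \<nu> (F i))) = ennreal (\<Sum>i. pos_var \<nu> (F i))"
      by (rule suminf_ennreal2) (use pv_nonneg[OF sm] s in \<open>auto simp: sums_summable\<close>)
    then show "(\<Sum>i. ennreal (pos_var \<nu> (F i))) = ennreal (pos_var \<nu> (\<Union>i. F i))"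
      using s by (simp add: sums_unique[symmetric])
  qed
qed

lemma pm_measure_univ:
  fixes \<nu> :: "'a::topological_space set \<Rightarrow> real"
  assumes sm: "signed_measure \<nu>"
  shows "measure (pos_meas \<nu>) (space (pos_meas \<nu>)) = pos_var \<nu> UNIV"
  using pm_emeasure[OF sm, of UNIV] pv_nonneg[OF sm, of UNIV]
  by (simp add: measure_def pm_space)

lemma sm_int_const:
  fixes \<nu> :: "'a::topological_space set \<Rightarrow> real"
  assumes sm: "signed_measure \<nu>"
  shows "sm_integral \<nu> (\<lambda>x. c) = c * \<nu> UNIV"
proof -
  have smn: "signed_measure (\<lambda>A. - \<nu> A)" by (rule sm_uminus[OF sm])
  have "sm_integral \<nu> (\<lambda>x. c) = pos_var \<nu> UNIV * c - pos_var (\<lambda>A. - \<nu> A) UNIV * c"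
    unfolding sm_integral_def neg_meas_def
    using pm_measure_univ[OF sm] pm_measure_univ[OF smn] by simp
  also have "\<dots> = c * \<nu> UNIV" using pv_jordan[OF sm, of UNIV] by (simp add: algebra_simps)
  finally show ?thesis .
qed

definition dsm :: "'a::topological_space \<Rightarrow> 'a set \<Rightarrow> real" where
  "dsm x = (\<lambda>A. if A \<in> sets borel then indicator A x else 0)"

lemma dsm_sm: "signed_measure (dsm (x::'a::topological_space))"
  unfolding signed_measure_def
proof (intro conjI allI impI)
  fix A :: "'a set" assume "A \<notin> sets borel" then show "dsm x A = 0" by (simp add: dsm_def)
next
  show "dsm x {} = 0" by (simp add: dsm_def)
next
  fix F :: "nat \<Rightarrow> 'a set" assume F: "range F \<subseteq> sets borel" "disjoint_family F"
  have U: "(\<Union>n. F n) \<in> sets borel" using F by auto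
  show "(\<lambda>n. dsm x (F n)) sums dsm x (\<Union>n. F n)"
  proof (cases "\<exists>i. x \<in> F i")
    case True
    then obtain i where i: "x \<in> F i" by blast
    have "x \<notin> F n" if "n \<noteq> i" for n using F(2) i that unfolding disjoint_family_on_def by blast
    then have "(\<lambda>n. dsm x (F n)) = (\<lambda>n. if n = i then dsm x (F n) else 0)"
      using F(1) by (auto simp: dsm_def)
    moreover have "dsm x (\<Union>n. F n) = dsm x (F i)" using i U F(1) by (auto simp: dsm_def indicator_def)
    ultimately show ?thesis using sums_single[of i "\<lambda>n. dsm x (F n)"] by simp
  next
    case False
    then show ?thesis using U F(1) by (auto simp: dsm_def)
  qed
qed

lemma dsm_point: "dsm x {y::'a::t2_space} = (if y = x then 1 else 0)"
  by (simp add: dsm_def finite_borel)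

lemma pv_dsm: "pos_var (dsm (x::'a::t2_space)) A = indicator A x"
proof (cases "x \<in> A")
  case True
  have "1 \<le> pos_var (dsm x) A" using pv_upper[OF dsm_sm, of "{x}" A x] True
    by (simp add: finite_borel dsm_point)
  moreover have "pos_var (dsm x) A \<le> 1" by (rule pv_least) (auto simp: dsm_def indicator_def)
  ultimately show ?thesis using True by simp
next
  case False
  have "pos_var (dsm x) A \<le> 0" by (rule pv_least) (use False in \<open>auto simp: dsm_def indicator_def\<close>)
  then show ?thesis using False pv_nonneg[OF dsm_sm, of x A] by simp
qed

lemma pv_ndsm: "pos_var (\<lambda>A. - dsm (x::'a::t2_space) A) A = 0"
proof -
  have "pos_var (\<lambda>A. - dsm x A) A \<le> 0" by (rule pv_least) (auto simp: dsm_def indicator_def)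
  then show ?thesis using pv_nonneg[OF sm_uminus[OF dsm_sm], of x A] by simp
qed

lemma sm_int_dsm:
  fixes f :: "'a::t2_space \<Rightarrow> real"
  assumes f: "f \<in> borel_measurable borel"
  shows "sm_integral (dsm x) f = f x"
proof -
  have 1: "pos_meas (dsm x) = return borel x"
    by (rule measure_eqI) (auto simp: pm_sets pm_emeasure[OF dsm_sm] pv_dsm indicator_def)
  have 2: "neg_meas (dsm x) = null_measure borel"
    unfolding neg_meas_def
    by (rule measure_eqI) (auto simp: pm_sets pm_emeasure[OF sm_uminus[OF dsm_sm]] pv_ndsm)
  show ?thesis unfolding sm_integral_def 1 2 using integral_return[of x borel f] f by simp
qed




definition phi :: "('a::topological_space set \<Rightarrow> real) \<Rightarrow> real" where
  "phi \<nu> = \<nu> UNIV - infsum (\<lambda>x. \<nu> {x}) UNIV"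

lemma pts_abs_summable:
  fixes \<nu> :: "'a::t2_space set \<Rightarrow> real"
  assumes sm: "signed_measure \<nu>"
  shows "(\<lambda>x. norm (\<nu> {x})) summable_on UNIV"
  by (rule nonneg_bdd_above_summable_on)
     (use tv_points[OF sm] in \<open>auto intro!: bdd_aboveI[of _ "tv_norm \<nu>"]\<close>)

lemma pts_summable:
  fixes \<nu> :: "'a::t2_space set \<Rightarrow> real"
  assumes sm: "signed_measure \<nu>"
  shows "(\<lambda>x. \<nu> {x}) summable_on UNIV"
  using pts_abs_summable[OF sm] summable_on_iff_abs_summable_on_real by blast

lemma pts_infsum_bound:
  fixes \<nu> :: "'a::t2_space set \<Rightarrow> real"
  assumes sm: "signed_measure \<nu>"
  shows "\<bar>infsum (\<lambda>x. \<nu> {x}) UNIV\<bar> \<le> tv_norm \<nu>"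
proof -
  have "norm (infsum (\<lambda>x. \<nu> {x}) UNIV) \<le> infsum (\<lambda>x. norm (\<nu> {x})) UNIV"
    by (rule norm_infsum_bound[OF pts_abs_summable[OF sm]])
  also have "\<dots> \<le> tv_norm \<nu>"
    by (rule infsum_le_finite_sums[OF pts_abs_summable[OF sm]]) (use tv_points[OF sm] in auto)
  finally show ?thesis by simp
qed

lemma phi_bound:
  fixes \<nu> :: "'a::t2_space set \<Rightarrow> real"
  assumes sm: "signed_measure \<nu>"
  shows "\<bar>phi \<nu>\<bar> \<le> 2 * tv_norm \<nu>"
  using pts_infsum_bound[OF sm] tv_univ[OF sm] unfolding phi_def by linarith

lemma phi_lin:
  fixes \<nu> :: "'a::t2_space set \<Rightarrow> real"
  assumes sm: "signed_measure \<nu>" "signed_measure \<eta>"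
  shows "phi (\<lambda>A. a * \<nu> A + b * \<eta> A) = a * phi \<nu> + b * phi \<eta>"
proof -
  have "infsum (\<lambda>x. a * \<nu> {x} + b * \<eta> {x}) UNIV = infsum (\<lambda>x. a * \<nu> {x}) UNIV + infsum (\<lambda>x. b * \<eta> {x}) UNIV"
    by (rule infsum_add) (use pts_summable[OF sm(1)] pts_summable[OF sm(2)] in \<open>auto intro: summable_on_cmult_right\<close>)
  also have "\<dots> = a * infsum (\<lambda>x. \<nu> {x}) UNIV + b * infsum (\<lambda>x. \<eta> {x}) UNIV"
    using pts_summable[OF sm(1)] pts_summable[OF sm(2)] by (simp add: infsum_cmult_right)
  finally show ?thesis unfolding phi_def by (simp add: algebra_simps)
qed

lemma phi_pos:
  fixes \<nu> :: "'a::t2_space set \<Rightarrow> real"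
  assumes p: "positive_sm \<nu>"
  shows "0 \<le> phi \<nu>" "phi \<nu> \<le> \<nu> UNIV"
proof -
  have sm: "signed_measure \<nu>" and nn: "\<And>A. 0 \<le> \<nu> A" using p by (auto simp: positive_sm_def)
  have "infsum (\<lambda>x. \<nu> {x}) UNIV \<le> \<nu> UNIV"
    by (rule infsum_le_finite_sums[OF pts_summable[OF sm]])
       (use sm_points[OF sm] pos_le_univ[OF p] in auto)
  then show "0 \<le> phi \<nu>" by (simp add: phi_def)
  show "phi \<nu> \<le> \<nu> UNIV" using infsum_nonneg[of UNIV "\<lambda>x. \<nu> {x}"] nn by (simp add: phi_def)
qed

lemma phi_dsm: "phi (dsm (x::'a::t2_space)) = 0"
proof -
  have "infsum (\<lambda>y. dsm x {y}) UNIV = infsum (\<lambda>y. dsm x {y}) {x}"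
    by (rule infsum_cong_neutral) (auto simp: dsm_point)
  then have "infsum (\<lambda>y. dsm x {y}) UNIV = 1" by (simp add: dsm_point)
  moreover have "dsm x UNIV = 1" by (simp add: dsm_def)
  ultimately show ?thesis by (simp add: phi_def)
qed

theorem mainTheorem6:
  fixes m :: "'a::polish_space set \<Rightarrow> real"
  assumes "positive_sm m" and "m \<noteq> (\<lambda>_. 0)" and "atomless_sm m"
  shows "\<forall>\<mu>::'a set \<Rightarrow> real. positive_sm \<mu> \<and> \<mu> \<noteq> (\<lambda>_. 0) \<longrightarrow>
           weakly_continuous (one_tensor \<mu>) \<and>
           (\<exists>T. bounded_op T \<and> op_le (\<lambda>_ _. 0) T \<and> op_le T (one_tensor \<mu>) \<and>
                 \<not> weakly_continuous T)"
proof (intro allI impI)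
  fix \<mu> :: "'a set \<Rightarrow> real"
  assume H: "positive_sm \<mu> \<and> \<mu> \<noteq> (\<lambda>_. 0)"
  then have pmu: "positive_sm \<mu>" and mu0: "\<mu> \<noteq> (\<lambda>_. 0)" by auto
  have smu: "signed_measure \<mu>" and nnmu: "\<And>A. 0 \<le> \<mu> A" using pmu by (auto simp: positive_sm_def)
  have muU: "0 \<le> \<mu> UNIV" by (rule nnmu)
  have wc1: "weakly_continuous (one_tensor \<mu>)"
    unfolding weakly_continuous_def
  proof (intro conjI)
    show "bounded_op (one_tensor \<mu>)"
      unfolding bounded_op_def
    proof (intro conjI allI impI)
      fix \<nu> :: "'a set \<Rightarrow> real" assume "signed_measure \<nu>"
      show "signed_measure (one_tensor \<mu> \<nu>)" unfolding one_tensor_def by (rule sm_scale[OF smu])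
    next
      fix \<nu> \<eta> :: "'a set \<Rightarrow> real" and a b :: real
      show "one_tensor \<mu> (\<lambda>A. a * \<nu> A + b * \<eta> A) = (\<lambda>A. a * one_tensor \<mu> \<nu> A + b * one_tensor \<mu> \<eta> A)"
        by (simp add: one_tensor_def algebra_simps)
    next
      have "tv_norm (one_tensor \<mu> \<nu>) \<le> \<mu> UNIV * tv_norm \<nu>" if sm: "signed_measure \<nu>" for \<nu>
      proof -
        have "tv_norm (one_tensor \<mu> \<nu>) \<le> \<bar>\<nu> UNIV\<bar> * \<mu> UNIV"
          unfolding one_tensor_def by (rule tv_scale_pos[OF pmu])
        also have "\<dots> \<le> tv_norm \<nu> * \<mu> UNIV" by (rule mult_right_mono[OF tv_univ[OF sm] muU])
        finally show ?thesis by (simp add: mult.commute)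
      qed
      then show "\<exists>C. \<forall>\<nu>. signed_measure \<nu> \<longrightarrow> tv_norm (one_tensor \<mu> \<nu>) \<le> C * tv_norm \<nu>" by blast
    qed
    show "\<exists>k. bounded_kernel k \<and> (\<forall>\<nu>. signed_measure \<nu> \<longrightarrow>
           (\<forall>A\<in>sets borel. one_tensor \<mu> \<nu> A = sm_integral \<nu> (\<lambda>x. k x A)))"
    proof (intro exI conjI allI impI ballI)
      show "bounded_kernel (\<lambda>x::'a. \<mu>)" unfolding bounded_kernel_def using smu by auto
      fix \<nu> :: "'a set \<Rightarrow> real" and A assume "signed_measure \<nu>"
      then show "one_tensor \<mu> \<nu> A = sm_integral \<nu> (\<lambda>x. \<mu> A)"
        by (simp add: sm_int_const one_tensor_def mult.commute)
    qed
  qed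
  define T where "T = (\<lambda>\<nu> :: 'a set \<Rightarrow> real. \<lambda>A. phi \<nu> * \<mu> A)"
  have bT: "bounded_op T"
    unfolding bounded_op_def
  proof (intro conjI allI impI)
    fix \<nu> :: "'a set \<Rightarrow> real" assume "signed_measure \<nu>"
    show "signed_measure (T \<nu>)" unfolding T_def by (rule sm_scale[OF smu])
  next
    fix \<nu> \<eta> :: "'a set \<Rightarrow> real" and a b :: real
    assume "signed_measure \<nu>" "signed_measure \<eta>"
    then show "T (\<lambda>A. a * \<nu> A + b * \<eta> A) = (\<lambda>A. a * T \<nu> A + b * T \<eta> A)"
      by (simp add: T_def phi_lin algebra_simps)
  next
    have "tv_norm (T \<nu>) \<le> (2 * \<mu> UNIV) * tv_norm \<nu>" if sm: "signed_measure \<nu>" for \<nu>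
    proof -
      have "tv_norm (T \<nu>) \<le> \<bar>phi \<nu>\<bar> * \<mu> UNIV"
        unfolding T_def by (rule tv_scale_pos[OF pmu])
      also have "\<dots> \<le> (2 * tv_norm \<nu>) * \<mu> UNIV" by (rule mult_right_mono[OF phi_bound[OF sm] muU])
      finally show ?thesis by (simp add: algebra_simps)
    qed
    then show "\<exists>C. \<forall>\<nu>. signed_measure \<nu> \<longrightarrow> tv_norm (T \<nu>) \<le> C * tv_norm \<nu>" by blast
  qed
  have le1: "op_le (\<lambda>_ _. 0) T"
    unfolding op_le_def T_def using phi_pos(1) nnmu by (auto intro: mult_nonneg_nonneg)
  have le2: "op_le T (one_tensor \<mu>)"
    unfolding op_le_def T_def one_tensor_def using phi_pos(2) nnmu by (auto intro: mult_right_mono)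
  have nwc: "\<not> weakly_continuous T"
  proof
    assume "weakly_continuous T"
    then obtain k where k: "bounded_kernel k"
      and kT: "\<And>\<nu> A. signed_measure \<nu> \<Longrightarrow> A \<in> sets borel \<Longrightarrow> T \<nu> A = sm_integral \<nu> (\<lambda>x. k x A)"
      unfolding weakly_continuous_def by blast
    have k0: "k x A = 0" if A: "A \<in> sets borel" for x A
    proof -
      have meas: "(\<lambda>y. k y A) \<in> borel_measurable borel" using k A by (simp add: bounded_kernel_def)
      have "T (dsm x) A = k x A" using kT[OF dsm_sm A] sm_int_dsm[OF meas] by simp
      then show ?thesis by (simp add: T_def phi_dsm)
    qed
    have sm_m: "signed_measure m" and nnm: "\<And>A. 0 \<le> m A" using assms(1) by (auto simp: positive_sm_def)
    have Tm0: "T m A = 0" if A: "A \<in> sets borel" for A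
    proof -
      have "(\<lambda>y. k y A) = (\<lambda>y. 0)" using k0[OF A] by auto
      then show ?thesis using kT[OF sm_m A] sm_int_const[OF sm_m, of 0] by simp
    qed
    obtain A0 where A0: "\<mu> A0 \<noteq> 0" using mu0 by auto
    then have "A0 \<in> sets borel" using sm_nonborel[OF smu] by blast
    then have "phi m * \<mu> A0 = 0" using Tm0 by (simp add: T_def)
    then have "phi m = 0" using A0 by simp
    moreover have "m {x} = 0" for x
    proof (rule ccontr)
      assume "m {x} \<noteq> 0"
      then have pos: "m {x} > 0" using nnm[of "{x}"] by simp
      have "\<forall>B \<in> sets borel. B \<subseteq> {x} \<longrightarrow> m B = 0 \<or> m B = m {x}"
        using sm_empty[OF sm_m] by (auto simp: subset_singleton_iff)
      then show False using assms(3) pos finite_borel[of "{x}"] unfolding atomless_sm_def by auto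
    qed
    ultimately have "m UNIV = 0" by (simp add: phi_def)
    then have "m = (\<lambda>_. 0)" using nnm pos_le_univ[OF assms(1)] by (intro ext) (metis order_antisym)
    then show False using assms(2) by simp
  qed
  show "weakly_continuous (one_tensor \<mu>) \<and>
           (\<exists>T. bounded_op T \<and> op_le (\<lambda>_ _. 0) T \<and> op_le T (one_tensor \<mu>) \<and> \<not> weakly_continuous T)"
    using wc1 bT le1 le2 nwc by blast
qed


end
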